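(* Fix an integer $k\geq1$ and $V=\{0,\ldots,k\}$. A Boolean function $\varphi$ on $V$ is fragmentable if and only if $\mathrm{eul}(\varphi)=0$.
   Context: A valuation is a subset $\nu\subseteq V$; $\nu^{(l)}$ is $\nu$ with membership of $l$ flipped. A Boolean function on $V$ is a map $\varphi:2^V\to\{\text{false},\text{true}\}$; $\mathrm{eul}(\varphi)=\sum_{\nu:\varphi(\nu)=\text{true}}(-1)^{|\nu|}$. $\varphi$ is degenerate if there is $l\in V$ with $\varphi(\nu)=\varphi(\nu^{(l)})$ for all $\nu$. Two functions are disjoint if no valuation satisfies both. A $\neg$-$\vee$-template is a Boolean circuit all of whose internal gates are $\neg$- or $\vee$-gates (a single leaf is allowed); its leaves $l_0,\ldots,l_n$ are holes. $T[\varphi_0,\ldots,\varphi_n]$ is the function obtained by substituting $\varphi_i$ for $l_i$; it is deterministic if, for every $\vee$-gate of the template, any two distinct inputs compute disjoint functions. $\varphi$ is fragmentable if there exist a $\neg$-$\vee$-template $T$ and degenerate functions $\varphi_0,\ldots,\varphi_n$ (one per hole) such that $T[\varphi_0,\ldots,\varphi_n]$ is deterministic and equivalent to $\varphi$. *)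

theory Defs
  imports Main
begin

text \<open>Valuations over V are sets nu with nu a subset of V; a Boolean function on V is
  represented by a predicate on nat sets, of which only the values on subsets of V matter.\<close>

type_synonym bfun = "nat set \<Rightarrow> bool"

definition flip :: "nat set \<Rightarrow> nat \<Rightarrow> nat set" where
  "flip \<nu> l = (if l \<in> \<nu> then \<nu> - {l} else insert l \<nu>)"

definition eul :: "nat set \<Rightarrow> bfun \<Rightarrow> int" where
  "eul V \<phi> = (\<Sum>\<nu> \<in> {\<nu>. \<nu> \<subseteq> V \<and> \<phi> \<nu>}. (-1) ^ card \<nu>)"

definition degenerate :: "nat set \<Rightarrow> bfun \<Rightarrow> bool" where
  "degenerate V \<phi> = (\<exists>l \<in> V. \<forall>\<nu>. \<nu> \<subseteq> V \<longrightarrow> \<phi> \<nu> = \<phi> (flip \<nu> l))"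

definition disjoint_fun :: "nat set \<Rightarrow> bfun \<Rightarrow> bfun \<Rightarrow> bool" where
  "disjoint_fun V \<phi> \<psi> = (\<forall>\<nu>. \<nu> \<subseteq> V \<longrightarrow> \<not> (\<phi> \<nu> \<and> \<psi> \<nu>))"

definition equiv_fun :: "nat set \<Rightarrow> bfun \<Rightarrow> bfun \<Rightarrow> bool" where
  "equiv_fun V \<phi> \<psi> = (\<forall>\<nu>. \<nu> \<subseteq> V \<longrightarrow> \<phi> \<nu> = \<psi> \<nu>)"

text \<open>A negation-disjunction template with its holes already filled: leaves carry the
  substituted functions, internal gates are negations or disjunctions of arbitrary fan-in.
  (A circuit with shared subcircuits can be unfolded into such a tree.)\<close>

datatype 'a tmpl = Hole 'a | Neg "'a tmpl" | Or "'a tmpl list"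

fun holes :: "'a tmpl \<Rightarrow> 'a set" where
  "holes (Hole a) = {a}"
| "holes (Neg t) = holes t"
| "holes (Or ts) = (\<Union>t \<in> set ts. holes t)"

fun sem :: "bfun tmpl \<Rightarrow> bfun" where
  "sem (Hole \<phi>) = \<phi>"
| "sem (Neg t) = (\<lambda>\<nu>. \<not> sem t \<nu>)"
| "sem (Or ts) = (\<lambda>\<nu>. \<exists>t \<in> set ts. sem t \<nu>)"

fun deterministic :: "nat set \<Rightarrow> bfun tmpl \<Rightarrow> bool" where
  "deterministic V (Hole \<phi>) = True"
| "deterministic V (Neg t) = deterministic V t"
| "deterministic V (Or ts) =
     ((\<forall>t \<in> set ts. deterministic V t) \<and>
      (\<forall>i < length ts. \<forall>j < length ts. i \<noteq> j \<longrightarrow>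
          disjoint_fun V (sem (ts ! i)) (sem (ts ! j))))"

definition fragmentable :: "nat set \<Rightarrow> bfun \<Rightarrow> bool" where
  "fragmentable V \<phi> = (\<exists>T. (\<forall>\<psi> \<in> holes T. degenerate V \<psi>) \<and> deterministic V T
                             \<and> equiv_fun V (sem T) \<phi>)"

end

theory Submission
  imports Defs
begin

lemma flip_flip[simp]: "flip (flip x l) l = x"
  unfolding flip_def by auto

lemma flip_sub: "x \<subseteq> V \<Longrightarrow> l \<in> V \<Longrightarrow> flip x l \<subseteq> V"
  unfolding flip_def by auto

lemma flip_neq: "flip x l \<noteq> x"
  unfolding flip_def by auto

lemma eul_cong: "equiv_fun V f g \<Longrightarrow> eul V f = eul V g"
  unfolding equiv_fun_def eul_def
  by (rule arg_cong[where f="sum _"]) auto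

lemma eul_deg:
  assumes fin: "finite V" and d: "degenerate V \<psi>"
  shows "eul V \<psi> = 0"
proof -
  obtain l where lV: "l \<in> V" and inv: "\<And>\<nu>. \<nu> \<subseteq> V \<Longrightarrow> \<psi> \<nu> = \<psi> (flip \<nu> l)"
    using d unfolding degenerate_def by blast
  define A where "A = {\<nu>. \<nu> \<subseteq> V \<and> \<psi> \<nu>}"
  define A0 where "A0 = {\<nu>\<in>A. l \<notin> \<nu>}"
  define A1 where "A1 = {\<nu>\<in>A. l \<in> \<nu>}"
  have finA: "finite A" unfolding A_def using fin
    by (metis (no_types, lifting) Collect_mono_iff Pow_def finite_Pow_iff rev_finite_subset)
  have A01: "A = A0 \<union> A1" "A0 \<inter> A1 = {}" unfolding A0_def A1_def by auto
  have img: "A1 = insert l ` A0"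
  proof
    show "A1 \<subseteq> insert l ` A0"
    proof
      fix \<nu> assume h: "\<nu> \<in> A1"
      hence "\<nu> - {l} \<in> A0" using inv[of \<nu>] unfolding A1_def A0_def A_def flip_def by auto
      moreover have "\<nu> = insert l (\<nu> - {l})" using h unfolding A1_def by auto
      ultimately show "\<nu> \<in> insert l ` A0" by blast
    qed
  next
    show "insert l ` A0 \<subseteq> A1"
    proof
      fix x assume "x \<in> insert l ` A0"
      then obtain \<nu> where x: "x = insert l \<nu>" and h: "\<nu> \<in> A0" by blast
      thus "x \<in> A1" using inv[of \<nu>] lV unfolding A1_def A0_def A_def flip_def by auto
    qed
  qed
  have inj: "inj_on (insert l) A0"
  proof (rule inj_onI)
    fix x y assume "x \<in> A0" "y \<in> A0" "insert l x = insert l y"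
    thus "x = y" unfolding A0_def by (metis Diff_insert_absorb mem_Collect_eq)
  qed
  have "sum (\<lambda>\<nu>. (-1::int) ^ card \<nu>) A1 = sum (\<lambda>\<nu>. (-1::int) ^ card (insert l \<nu>)) A0"
    unfolding img using sum.reindex[OF inj] by simp
  also have "\<dots> = sum (\<lambda>\<nu>. - ((-1::int) ^ card \<nu>)) A0"
  proof (rule sum.cong)
    fix \<nu> assume "\<nu> \<in> A0"
    hence "finite \<nu>" "l \<notin> \<nu>" unfolding A0_def A_def using fin finite_subset by auto
    thus "(-1::int) ^ card (insert l \<nu>) = - ((-1) ^ card \<nu>)" by simp
  qed simp
  finally have "sum (\<lambda>\<nu>. (-1::int) ^ card \<nu>) A1 = - sum (\<lambda>\<nu>. (-1::int) ^ card \<nu>) A0"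
    by (simp add: sum_negf)
  moreover have "eul V \<psi> = sum (\<lambda>\<nu>. (-1::int) ^ card \<nu>) A0 + sum (\<lambda>\<nu>. (-1::int) ^ card \<nu>) A1"
    unfolding eul_def A_def[symmetric] A01(1)
    by (rule sum.union_disjoint) (use finA A01 in auto)
  ultimately show ?thesis by simp
qed

lemma finite_subV: "finite V \<Longrightarrow> finite {\<nu>. \<nu> \<subseteq> V \<and> P \<nu>}"
  by (metis (no_types, lifting) Collect_mono_iff Pow_def finite_Pow_iff rev_finite_subset)

lemma eul_disj:
  assumes "finite V" "disjoint_fun V f g"
  shows "eul V (\<lambda>\<nu>. f \<nu> \<or> g \<nu>) = eul V f + eul V g"
proof -
  have "{\<nu>. \<nu> \<subseteq> V \<and> (f \<nu> \<or> g \<nu>)} = {\<nu>. \<nu> \<subseteq> V \<and> f \<nu>} \<union> {\<nu>. \<nu> \<subseteq> V \<and> g \<nu>}" by auto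
  moreover have "{\<nu>. \<nu> \<subseteq> V \<and> f \<nu>} \<inter> {\<nu>. \<nu> \<subseteq> V \<and> g \<nu>} = {}"
    using assms(2) unfolding disjoint_fun_def by auto
  ultimately show ?thesis unfolding eul_def
    using sum.union_disjoint[OF finite_subV[OF assms(1)] finite_subV[OF assms(1)]] by simp
qed

lemma eul_neg:
  assumes "finite V"
  shows "eul V (\<lambda>\<nu>. \<not> f \<nu>) = eul V (\<lambda>_. True) - eul V f"
proof -
  have "disjoint_fun V f (\<lambda>\<nu>. \<not> f \<nu>)" unfolding disjoint_fun_def by auto
  from eul_disj[OF assms this] show ?thesis by simp
qed

lemma eul_or:
  assumes fin: "finite V"
  shows "(\<forall>t\<in>set ts. eul V (sem t) = 0) \<Longrightarrow> deterministic V (Or ts) \<Longrightarrow> eul V (sem (Or ts)) = 0"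
proof (induction ts)
  case Nil
  then show ?case unfolding eul_def by simp
next
  case (Cons t ts)
  have det: "deterministic V (Or ts)"
  proof -
    have "\<forall>i<length ts. \<forall>j<length ts. i \<noteq> j \<longrightarrow> disjoint_fun V (sem (ts ! i)) (sem (ts ! j))"
    proof (intro allI impI)
      fix i j assume "i < length ts" "j < length ts" "i \<noteq> j"
      with Cons.prems(2) have "disjoint_fun V (sem ((t#ts) ! Suc i)) (sem ((t#ts) ! Suc j))"
        by (metis Suc_inject deterministic.simps(3) length_Cons not_less_eq)
      thus "disjoint_fun V (sem (ts ! i)) (sem (ts ! j))" by simp
    qed
    thus ?thesis using Cons.prems(2) by simp
  qed
  have dj: "disjoint_fun V (sem t) (sem (Or ts))"
    unfolding disjoint_fun_def
  proof (intro allI impI notI)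
    fix \<nu> assume sub: "\<nu> \<subseteq> V" and h: "sem t \<nu> \<and> sem (Or ts) \<nu>"
    then obtain j where j: "j < length ts" "sem (ts ! j) \<nu>" by (auto simp: in_set_conv_nth)
    have "disjoint_fun V (sem ((t#ts) ! 0)) (sem ((t#ts) ! Suc j))"
      using Cons.prems(2) j(1) by (metis deterministic.simps(3) length_Cons nat.distinct(1) not_less_eq zero_less_Suc)
    thus False using sub h j unfolding disjoint_fun_def by auto
  qed
  have "sem (Or (t#ts)) = (\<lambda>\<nu>. sem t \<nu> \<or> sem (Or ts) \<nu>)" by auto
  hence "eul V (sem (Or (t#ts))) = eul V (sem t) + eul V (sem (Or ts))"
    using eul_disj[OF fin dj] by simp
  then show ?case using Cons det by simp
qed

lemma eul_tmpl:
  assumes fin: "finite V" and ne: "V \<noteq> {}"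
  shows "(\<forall>\<psi>\<in>holes T. degenerate V \<psi>) \<Longrightarrow> deterministic V T \<Longrightarrow> eul V (sem T) = 0"
proof (induction T)
  case (Hole x)
  then show ?case using eul_deg[OF fin] by simp
next
  case (Neg T)
  have "degenerate V (\<lambda>_. True)" using ne unfolding degenerate_def by auto
  hence "eul V (\<lambda>_. True) = 0" using eul_deg[OF fin] by blast
  then show ?case using Neg eul_neg[OF fin] by simp
next
  case (Or ts)
  show ?case
    by (rule eul_or[OF fin]) (use Or in auto)
qed

definition frag :: "nat set \<Rightarrow> nat set set \<Rightarrow> bool" where
  "frag V S = (\<exists>T. (\<forall>\<psi> \<in> holes T. degenerate V \<psi>) \<and> deterministic V T
                   \<and> equiv_fun V (sem T) (\<lambda>\<nu>. \<nu> \<in> S))"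

lemma frag_empty: "frag V {}"
  unfolding frag_def by (rule exI[of _ "Or []"]) (simp add: equiv_fun_def)

lemma frag_compl: "frag V A \<Longrightarrow> frag V (- A)"
  unfolding frag_def
proof (elim exE conjE)
  fix T assume "\<forall>\<psi>\<in>holes T. degenerate V \<psi>" "deterministic V T" "equiv_fun V (sem T) (\<lambda>\<nu>. \<nu> \<in> A)"
  thus "\<exists>T. (\<forall>\<psi>\<in>holes T. degenerate V \<psi>) \<and> deterministic V T \<and> equiv_fun V (sem T) (\<lambda>\<nu>. \<nu> \<in> - A)"
    by (intro exI[of _ "Neg T"]) (auto simp: equiv_fun_def)
qed

lemma less2: "(i::nat) < 2 \<Longrightarrow> i = 0 \<or> i = 1" by auto

lemma frag_union: "frag V A \<Longrightarrow> frag V B \<Longrightarrow> A \<inter> B = {} \<Longrightarrow> frag V (A \<union> B)"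
  unfolding frag_def
proof (elim exE conjE)
  fix TA TB assume a: "\<forall>\<psi>\<in>holes TA. degenerate V \<psi>" "deterministic V TA" "equiv_fun V (sem TA) (\<lambda>\<nu>. \<nu> \<in> A)"
    and b: "\<forall>\<psi>\<in>holes TB. degenerate V \<psi>" "deterministic V TB" "equiv_fun V (sem TB) (\<lambda>\<nu>. \<nu> \<in> B)"
    and d: "A \<inter> B = {}"
  have dj: "disjoint_fun V (sem TA) (sem TB)" "disjoint_fun V (sem TB) (sem TA)"
    using a(3) b(3) d unfolding disjoint_fun_def equiv_fun_def by auto
  have "\<forall>i<length [TA, TB]. \<forall>j<length [TA, TB]. i \<noteq> j \<longrightarrow>
          disjoint_fun V (sem ([TA, TB] ! i)) (sem ([TA, TB] ! j))"
  proof (intro allI impI)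
    fix i j assume "i < length [TA, TB]" "j < length [TA, TB]" "i \<noteq> j"
    hence "(i = 0 \<and> j = 1) \<or> (i = 1 \<and> j = 0)" by auto
    thus "disjoint_fun V (sem ([TA, TB] ! i)) (sem ([TA, TB] ! j))" using dj by auto
  qed
  thus "\<exists>T. (\<forall>\<psi>\<in>holes T. degenerate V \<psi>) \<and> deterministic V T \<and> equiv_fun V (sem T) (\<lambda>\<nu>. \<nu> \<in> A \<union> B)"
    using a b
    by (intro exI[of _ "Or [TA, TB]"]) (auto simp: equiv_fun_def)
qed

lemma frag_diff: "frag V A \<Longrightarrow> frag V B \<Longrightarrow> B \<subseteq> A \<Longrightarrow> frag V (A - B)"
proof -
  assume a: "frag V A" "frag V B" "B \<subseteq> A"
  have "frag V (- A \<union> B)" by (rule frag_union[OF frag_compl[OF a(1)] a(2)]) (use a(3) in auto)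
  hence "frag V (- (- A \<union> B))" by (rule frag_compl)
  moreover have "- (- A \<union> B) = A - B" by auto
  ultimately show ?thesis by simp
qed

lemma flip_eq_iff: "flip a l = b \<longleftrightarrow> a = flip b l"
  by (metis flip_flip)

lemma deg_pair: "l \<in> V \<Longrightarrow> degenerate V (\<lambda>\<nu>. \<nu> \<in> {x, flip x l})"
  unfolding degenerate_def
  by (rule bexI[of _ l]) (auto simp: flip_eq_iff)

lemma frag_flip: "l \<in> V \<Longrightarrow> frag V {x, flip x l}"
  unfolding frag_def
  by (rule exI[of _ "Hole (\<lambda>\<nu>. \<nu> \<in> {x, flip x l})"]) (use deg_pair[of l V x] in \<open>simp add: equiv_fun_def\<close>)

definition sd :: "nat set \<Rightarrow> nat set \<Rightarrow> nat set" where
  "sd a b = (a - b) \<union> (b - a)"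

lemma sd_flip: "l \<in> sd a b \<Longrightarrow> sd (flip a l) b = sd a b - {l}"
  unfolding sd_def flip_def by auto

lemma sd_single: "sd a b = {l} \<Longrightarrow> b = flip a l"
proof (rule set_eqI)
  fix x assume h: "sd a b = {l}"
  have "x \<in> sd a b \<longleftrightarrow> x = l" using h by simp
  thus "x \<in> b \<longleftrightarrow> x \<in> flip a l" unfolding sd_def flip_def by auto
qed

lemma sd_ne: "sd a b \<noteq> {} \<Longrightarrow> a \<noteq> b"
  unfolding sd_def by auto

lemma diff4: "a \<noteq> c \<Longrightarrow> a \<noteq> d \<Longrightarrow> b \<noteq> c \<Longrightarrow> b \<noteq> d \<Longrightarrow> c \<noteq> d \<Longrightarrow> a \<noteq> b
   \<Longrightarrow> ({a, c} \<union> {d, b}) - {c, d} = {a, b}"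
  by auto

lemma disj4: "a \<noteq> d \<Longrightarrow> a \<noteq> b \<Longrightarrow> c \<noteq> d \<Longrightarrow> c \<noteq> b \<Longrightarrow> {a, c} \<inter> {d, b} = {}"
  by auto

lemma sub4: "{c, d} \<subseteq> {a, c} \<union> {d, b}" by blast

lemma frag_pair:
  assumes fin: "finite V"
  shows "\<nu> \<subseteq> V \<Longrightarrow> \<mu> \<subseteq> V \<Longrightarrow> card (sd \<nu> \<mu>) = 2*n+1 \<Longrightarrow> frag V {\<nu>, \<mu>}"
proof (induction n arbitrary: \<nu>)
  case 0
  then obtain l where "sd \<nu> \<mu> = {l}" by (auto simp: card_Suc_eq)
  moreover hence "l \<in> V" using 0 unfolding sd_def by auto
  ultimately show ?case using sd_single frag_flip by metis
next
  case (Suc n)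
  have sdV: "sd a b \<subseteq> V" if "a \<subseteq> V" "b \<subseteq> V" for a b using that unfolding sd_def by auto
  have finsd: "finite (sd a b)" if "a \<subseteq> V" "b \<subseteq> V" for a b using sdV[OF that] fin finite_subset by blast
  have "sd \<nu> \<mu> \<noteq> {}" using Suc.prems(3) by auto
  then obtain l where l: "l \<in> sd \<nu> \<mu>" by blast
  have lV: "l \<in> V" using l sdV Suc.prems by blast
  define x1 where "x1 = flip \<nu> l"
  have x1V: "x1 \<subseteq> V" unfolding x1_def using flip_sub Suc.prems lV by blast
  have sd1: "sd x1 \<mu> = sd \<nu> \<mu> - {l}" unfolding x1_def using sd_flip[OF l] .
  have c1: "card (sd x1 \<mu>) = 2*n+2" using sd1 Suc.prems(3) l finsd[OF Suc.prems(1,2)] by simp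
  have "sd x1 \<mu> \<noteq> {}" using c1 by auto
  then obtain l' where l': "l' \<in> sd x1 \<mu>" by blast
  have l'V: "l' \<in> V" using l' sdV x1V Suc.prems by blast
  have ll': "l' \<noteq> l" using l' sd1 by auto
  define x2 where "x2 = flip x1 l'"
  have x2V: "x2 \<subseteq> V" unfolding x2_def using flip_sub x1V l'V by blast
  have sd2: "sd x2 \<mu> = sd x1 \<mu> - {l'}" unfolding x2_def using sd_flip[OF l'] .
  have c2: "card (sd x2 \<mu>) = 2*n+1" using sd2 c1 l' finsd[OF x1V Suc.prems(2)] by simp
  have IH: "frag V {x2, \<mu>}" using Suc.IH[OF x2V Suc.prems(2) c2] .
  have F1: "frag V {\<nu>, x1}" unfolding x1_def using frag_flip[OF lV] .
  have F2: "frag V {x1, x2}" unfolding x2_def using frag_flip[OF l'V] .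
  have n1: "x2 \<noteq> \<mu>" using sd_ne c2 by (metis card.empty add_is_0 one_neq_zero)
  have n2: "x1 \<noteq> \<mu>" using sd_ne c1 by (metis card.empty add_is_0 zero_neq_numeral)
  have n3: "\<nu> \<noteq> \<mu>" using sd_ne l by blast
  have n4: "x1 \<noteq> x2" unfolding x2_def using flip_neq by metis
  have n5: "\<nu> \<noteq> x2" unfolding x2_def x1_def flip_def using ll' by auto
  have n6: "\<nu> \<noteq> x1" unfolding x1_def using flip_neq by metis
  have "frag V ({\<nu>, x1} \<union> {x2, \<mu>})" by (rule frag_union[OF F1 IH]) (rule disj4[OF n5 n3 n4 n2])
  hence "frag V (({\<nu>, x1} \<union> {x2, \<mu>}) - {x1, x2})" by (rule frag_diff[OF _ F2]) (rule sub4)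
  moreover have "({\<nu>, x1} \<union> {x2, \<mu>}) - {x1, x2} = {\<nu>, \<mu>}" by (rule diff4[OF n6 n5 not_sym[OF n2] not_sym[OF n1] n4 n3])
  ultimately show ?case by simp
qed

lemma gen_sub2: "a \<in> S \<Longrightarrow> b \<in> S \<Longrightarrow> {a, b} \<subseteq> S" by blast
lemma gen_psub: "a \<in> S \<Longrightarrow> S - insert a B \<subset> S" by blast
lemma gen_diffsub: "S \<subseteq> P \<Longrightarrow> S - A \<subseteq> P" by blast
lemma gen_disj: "(S - A) \<inter> A = {}" by blast
lemma gen_un: "A \<subseteq> S \<Longrightarrow> (S - A) \<union> A = S" by blast

lemma card_sd: "finite a \<Longrightarrow> finite b \<Longrightarrow> card a + card b = card (sd a b) + 2 * card (a \<inter> b)"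
proof -
  assume f: "finite a" "finite b"
  have "card (sd a b) = card (a - b) + card (b - a)"
    unfolding sd_def by (rule card_Un_disjoint) (use f in auto)
  moreover have "card a = card (a - b) + card (a \<inter> b)"
  proof -
    have "a = (a - b) \<union> (a \<inter> b)" by blast
    hence "card a = card ((a - b) \<union> (a \<inter> b))" by simp
    also have "\<dots> = card (a - b) + card (a \<inter> b)" by (rule card_Un_disjoint) (use f in auto)
    finally show ?thesis .
  qed
  moreover have "card b = card (b - a) + card (a \<inter> b)"
  proof -
    have "b = (b - a) \<union> (a \<inter> b)" by blast
    hence "card b = card ((b - a) \<union> (a \<inter> b))" by simp
    also have "\<dots> = card (b - a) + card (a \<inter> b)" by (rule card_Un_disjoint) (use f in auto)
    finally show ?thesis .
  qed
  ultimately show ?thesis by simp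
qed

lemma frag_eul0:
  assumes fin: "finite V"
  shows "S \<subseteq> Pow V \<Longrightarrow> (\<Sum>\<nu>\<in>S. (-1::int) ^ card \<nu>) = 0 \<Longrightarrow> frag V S"
proof (induction "card S" arbitrary: S rule: less_induct)
  case less
  have finS: "finite S" using less.prems(1) fin by (meson finite_Pow_iff finite_subset)
  show ?case
  proof (cases "S = {}")
    case True
    then show ?thesis using frag_empty by simp
  next
    case False
    have ev: "\<exists>\<nu>\<in>S. even (card \<nu>)"
    proof (rule ccontr)
      assume "\<not> ?thesis"
      hence "(\<Sum>\<nu>\<in>S. (-1::int) ^ card \<nu>) = (\<Sum>\<nu>\<in>S. -1)" by (intro sum.cong) auto
      also have "\<dots> = - int (card S)" by simp
      finally show False using less.prems(2) False finS by simp
    qed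
    have od: "\<exists>\<nu>\<in>S. odd (card \<nu>)"
    proof (rule ccontr)
      assume "\<not> ?thesis"
      hence "(\<Sum>\<nu>\<in>S. (-1::int) ^ card \<nu>) = (\<Sum>\<nu>\<in>S. 1)" by (intro sum.cong) auto
      also have "\<dots> = int (card S)" by simp
      finally show False using less.prems(2) False finS by simp
    qed
    obtain \<nu> \<mu> where nu: "\<nu> \<in> S" "even (card \<nu>)" and mu: "\<mu> \<in> S" "odd (card \<mu>)"
      using ev od by blast
    have neq: "\<nu> \<noteq> \<mu>" using nu(2) mu(2) by metis
    have sub: "\<nu> \<subseteq> V" "\<mu> \<subseteq> V" using subsetD[OF less.prems(1) nu(1)] subsetD[OF less.prems(1) mu(1)] by simp_all
    have "finite \<nu>" "finite \<mu>" using sub fin finite_subset by auto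
    from card_sd[OF this] nu(2) mu(2) have "odd (card (sd \<nu> \<mu>))" by presburger
    then obtain n where "card (sd \<nu> \<mu>) = 2*n+1" using oddE by blast
    have Fp: "frag V {\<nu>, \<mu>}" using frag_pair[OF fin sub \<open>card (sd \<nu> \<mu>) = 2*n+1\<close>] .
    define S' where "S' = S - {\<nu>, \<mu>}"
    have Asub: "{\<nu>, \<mu>} \<subseteq> S" using nu(1) mu(1) by (rule gen_sub2)
    have sum: "(\<Sum>\<nu>\<in>S. (-1::int) ^ card \<nu>) = (\<Sum>\<nu>\<in>S'. (-1::int) ^ card \<nu>) + (\<Sum>\<nu>\<in>{\<nu>,\<mu>}. (-1::int) ^ card \<nu>)"
      unfolding S'_def by (rule sum.subset_diff[OF Asub finS])
    have "(\<Sum>\<nu>\<in>{\<nu>,\<mu>}. (-1::int) ^ card \<nu>) = 0" using neq nu(2) mu(2) by simp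
    hence s0: "(\<Sum>\<nu>\<in>S'. (-1::int) ^ card \<nu>) = 0" using sum less.prems(2) by simp
    have "card S' < card S" unfolding S'_def
      by (rule psubset_card_mono[OF finS gen_psub[OF nu(1)]])
    moreover have "S' \<subseteq> Pow V" unfolding S'_def using less.prems(1) by (rule gen_diffsub)
    ultimately have FS': "frag V S'" using less.hyps s0 by blast
    have "frag V (S' \<union> {\<nu>, \<mu>})" unfolding S'_def by (rule frag_union[OF FS'[unfolded S'_def] Fp gen_disj])
    moreover have "S' \<union> {\<nu>, \<mu>} = S" unfolding S'_def using Asub by (rule gen_un)
    ultimately show ?thesis by simp
  qed
qed

theorem corollary5p4:
  fixes k :: nat and \<phi> :: "nat set \<Rightarrow> bool"
  assumes "k \<ge> 1"
  shows "fragmentable {0..k} \<phi> \<longleftrightarrow> eul {0..k} \<phi> = 0"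
proof
  assume "fragmentable {0..k} \<phi>"
  then obtain T where T: "\<forall>\<psi> \<in> holes T. degenerate {0..k} \<psi>" "deterministic {0..k} T"
      "equiv_fun {0..k} (sem T) \<phi>" unfolding fragmentable_def by blast
  have "eul {0..k} (sem T) = 0" by (rule eul_tmpl) (use T in auto)
  thus "eul {0..k} \<phi> = 0" using eul_cong[OF T(3)] by simp
next
  assume e: "eul {0..k} \<phi> = 0"
  define S where "S = {\<nu>. \<nu> \<subseteq> {0..k} \<and> \<phi> \<nu>}"
  have "frag {0..k} S" by (rule frag_eul0) (use e in \<open>auto simp: S_def eul_def\<close>)
  then obtain T where T: "\<forall>\<psi> \<in> holes T. degenerate {0..k} \<psi>" "deterministic {0..k} T"
      "equiv_fun {0..k} (sem T) (\<lambda>\<nu>. \<nu> \<in> S)" unfolding frag_def by blast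
  have "equiv_fun {0..k} (sem T) \<phi>" using T(3) unfolding equiv_fun_def S_def by auto
  thus "fragmentable {0..k} \<phi>" unfolding fragmentable_def using T by blast
qed

end
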